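(* Let $\theta$ and $\rho$ be regular infinite cardinals with $\theta < \rho < \kappa$, and let $K$ be a $\kappa$-complete ideal on $\kappa$ with $NS_\kappa|E^\kappa_\theta \subseteq K$. Then there are $c_\alpha \subseteq E^\kappa_{\geq\rho} \cap \alpha$ with $\sup c_\alpha = \alpha$, for $\alpha \in E^\kappa_\theta \cap acc(E^\kappa_{\geq\rho})$, such that $\{\alpha \in E^\kappa_\theta \cap acc(E^\kappa_{\geq\rho}) : c_\alpha \subseteq C\} \in K^+$ for every closed unbounded subset $C$ of $\kappa$.
   Context: $\kappa$ is a regular uncountable cardinal. An ideal on $\kappa$ is a nonempty $K \subseteq P(\kappa)$ with $\kappa \notin K$, every bounded subset of $\kappa$ in $K$, $K$ closed under subsets and under unions of two members; $K^+ = P(\kappa)\setminus K$; $\kappa$-complete means closed under unions of fewer than $\kappa$ members. For $A \subseteq \kappa$, $acc(A) = \{\alpha \in \kappa\setminus\{0\} : \sup(A\cap\alpha) = \alpha\}$. $E^\kappa_\theta = \{\alpha \in acc(\kappa) : \mathrm{cf}(\alpha) = \theta\}$, $E^\kappa_{\geq\rho} = \{\alpha \in acc(\kappa) : \mathrm{cf}(\alpha) \geq \rho\}$. $NS_\kappa|E^\kappa_\theta = \{B \subseteq \kappa : B \cap E^\kappa_\theta \text{ is nonstationary}\}$. *)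

theory Defs
  imports Main "HOL-Library.Countable_Set"
begin

text \<open>The regular uncountable cardinal kappa is represented by a well-order r
(a cardinal order, i.e. an initial ordinal) whose field is the set of ordinals
below kappa.  For alpha in Field r, underS r alpha is the set of ordinals below alpha.\<close>

definition lt :: "'a rel \<Rightarrow> 'a \<Rightarrow> 'a \<Rightarrow> bool" where
  "lt r x y \<longleftrightarrow> (x, y) \<in> r \<and> x \<noteq> y"

definition sup_eq :: "'a rel \<Rightarrow> 'a set \<Rightarrow> 'a \<Rightarrow> bool" where
  "sup_eq r A \<alpha> \<longleftrightarrow> A \<subseteq> underS r \<alpha> \<and> (\<forall>\<beta>. lt r \<beta> \<alpha> \<longrightarrow> (\<exists>\<gamma>\<in>A. lt r \<beta> \<gamma>))"

definition acc :: "'a rel \<Rightarrow> 'a set \<Rightarrow> 'a set" where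
  "acc r A = {\<alpha> \<in> Field r. underS r \<alpha> \<noteq> {} \<and> sup_eq r (A \<inter> underS r \<alpha>) \<alpha>}"

text \<open>cf(alpha) = theta, for theta in Field r (as an ordinal below kappa):
the least cardinality of a cofinal subset of alpha is |theta|\<close>
definition cf_eq :: "'a rel \<Rightarrow> 'a \<Rightarrow> 'a \<Rightarrow> bool" where
  "cf_eq r \<alpha> \<theta> \<longleftrightarrow>
     (\<exists>A. sup_eq r A \<alpha> \<and> (card_of A, card_of (underS r \<theta>)) \<in> ordIso) \<and>
     (\<forall>B. sup_eq r B \<alpha> \<longrightarrow> (card_of (underS r \<theta>), card_of B) \<in> ordLeq)"

definition cf_ge :: "'a rel \<Rightarrow> 'a \<Rightarrow> 'a \<Rightarrow> bool" where
  "cf_ge r \<alpha> \<rho> \<longleftrightarrow> (\<forall>B. sup_eq r B \<alpha> \<longrightarrow> (card_of (underS r \<rho>), card_of B) \<in> ordLeq)"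

definition E_eq :: "'a rel \<Rightarrow> 'a \<Rightarrow> 'a set" where
  "E_eq r \<theta> = {\<alpha> \<in> acc r (Field r). cf_eq r \<alpha> \<theta>}"

definition E_ge :: "'a rel \<Rightarrow> 'a \<Rightarrow> 'a set" where
  "E_ge r \<rho> = {\<alpha> \<in> acc r (Field r). cf_ge r \<alpha> \<rho>}"

definition regular_infinite_cardinal :: "'a rel \<Rightarrow> 'a \<Rightarrow> bool" where
  "regular_infinite_cardinal r \<theta> \<longleftrightarrow> \<theta> \<in> Field r \<and> infinite (underS r \<theta>) \<and>
     (\<forall>\<beta>. lt r \<beta> \<theta> \<longrightarrow> (card_of (underS r \<beta>), card_of (underS r \<theta>)) \<in> ordLess) \<and>
     cf_eq r \<theta> \<theta>"

definition regular_uncountable :: "'a rel \<Rightarrow> bool" where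
  "regular_uncountable r \<longleftrightarrow> Card_order r \<and> \<not> countable (Field r) \<and>
     (\<forall>A \<subseteq> Field r. (\<forall>\<beta>\<in>Field r. \<exists>\<gamma>\<in>A. lt r \<beta> \<gamma>) \<longrightarrow> (card_of A, r) \<in> ordIso)"

definition bounded :: "'a rel \<Rightarrow> 'a set \<Rightarrow> bool" where
  "bounded r B \<longleftrightarrow> (\<exists>\<beta>\<in>Field r. B \<subseteq> underS r \<beta>)"

definition is_ideal :: "'a rel \<Rightarrow> 'a set set \<Rightarrow> bool" where
  "is_ideal r K \<longleftrightarrow> K \<subseteq> Pow (Field r) \<and> K \<noteq> {} \<and> Field r \<notin> K \<and>
     (\<forall>B \<subseteq> Field r. bounded r B \<longrightarrow> B \<in> K) \<and>
     (\<forall>A\<in>K. \<forall>B. B \<subseteq> A \<longrightarrow> B \<in> K) \<and>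
     (\<forall>A\<in>K. \<forall>B\<in>K. A \<union> B \<in> K)"

definition kappa_complete :: "'a rel \<Rightarrow> 'a set set \<Rightarrow> bool" where
  "kappa_complete r K \<longleftrightarrow> (\<forall>F \<subseteq> K. (card_of F, r) \<in> ordLess \<longrightarrow> \<Union>F \<in> K)"

definition club :: "'a rel \<Rightarrow> 'a set \<Rightarrow> bool" where
  "club r C \<longleftrightarrow> C \<subseteq> Field r \<and> (\<forall>\<beta>\<in>Field r. \<exists>\<gamma>\<in>C. lt r \<beta> \<gamma>) \<and> acc r C \<subseteq> C"

definition stationary :: "'a rel \<Rightarrow> 'a set \<Rightarrow> bool" where
  "stationary r S \<longleftrightarrow> (\<forall>C. club r C \<longrightarrow> S \<inter> C \<noteq> {})"

definition NS_restr :: "'a rel \<Rightarrow> 'a \<Rightarrow> 'a set set" where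
  "NS_restr r \<theta> = {B. B \<subseteq> Field r \<and> \<not> stationary r (B \<inter> E_eq r \<theta>)}"

end

theory Submission
  imports Defs
begin

unbundle cardinal_syntax




locale KK = fixes r :: "'a rel" assumes RU: "regular_uncountable r"
begin

lemma CO: "Card_order r" using RU unfolding regular_uncountable_def by auto
lemma WO: "Well_order r" using CO unfolding card_order_on_def by auto
lemma wo: "wo_rel r" using WO unfolding wo_rel_def by auto
lemma uncount: "\<not> countable (Field r)" using RU unfolding regular_uncountable_def by auto
lemma infF: "infinite (Field r)" using uncount countable_finite by auto

lemma refl: "x \<in> Field r \<Longrightarrow> (x,x) \<in> r"
  using refl_onD[OF wo_rel.REFL[OF wo]] by blast
lemma trans: "(x,y) \<in> r \<Longrightarrow> (y,z) \<in> r \<Longrightarrow> (x,z) \<in> r"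
  using transD[OF wo_rel.TRANS[OF wo]] by blast
lemma antisym: "(x,y) \<in> r \<Longrightarrow> (y,x) \<in> r \<Longrightarrow> x = y"
  using antisymD[OF wo_rel.ANTISYM[OF wo]] by blast
lemma total: "x \<in> Field r \<Longrightarrow> y \<in> Field r \<Longrightarrow> (x,y) \<in> r \<or> (y,x) \<in> r"
  using wo_rel.TOTALS[OF wo] by blast
lemma inF1: "(x,y) \<in> r \<Longrightarrow> x \<in> Field r" by (auto simp: Field_def)
lemma inF2: "(x,y) \<in> r \<Longrightarrow> y \<in> Field r" by (auto simp: Field_def)

lemma ltF1: "lt r x y \<Longrightarrow> x \<in> Field r" unfolding lt_def by (auto simp: Field_def)
lemma ltF2: "lt r x y \<Longrightarrow> y \<in> Field r" unfolding lt_def by (auto simp: Field_def)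
lemma lt_le: "lt r x y \<Longrightarrow> (x,y) \<in> r" unfolding lt_def by auto
lemma lt_irr: "\<not> lt r x x" unfolding lt_def by auto
lemma lt_trans: assumes a: "lt r x y" and b: "lt r y z" shows "lt r x z"
proof -
  have 1: "(x,y) \<in> r" "(y,z) \<in> r" "x \<noteq> y" "y \<noteq> z" using a b unfolding lt_def by auto
  have 2: "(x,z) \<in> r" using trans[OF 1(1) 1(2)] .
  have "x \<noteq> z" proof assume "x = z" thus False using antisym[OF 1(1)] 1 by auto qed
  thus ?thesis using 2 unfolding lt_def by auto
qed
lemma lt_le_trans: assumes a: "lt r x y" and b: "(y,z) \<in> r" shows "lt r x z"
proof -
  have 1: "(x,y) \<in> r" "x \<noteq> y" using a unfolding lt_def by auto
  have 2: "(x,z) \<in> r" using trans[OF 1(1) b] .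
  have "x \<noteq> z" proof assume "x = z" thus False using antisym[OF 1(1)] 1 b by auto qed
  thus ?thesis using 2 unfolding lt_def by auto
qed
lemma le_lt_trans: assumes a: "(x,y) \<in> r" and b: "lt r y z" shows "lt r x z"
proof -
  have 1: "(y,z) \<in> r" "y \<noteq> z" using b unfolding lt_def by auto
  have 2: "(x,z) \<in> r" using trans[OF a 1(1)] .
  have "x \<noteq> z" proof assume "x = z" thus False using antisym[OF a] 1 by auto qed
  thus ?thesis using 2 unfolding lt_def by auto
qed
lemma not_lt: assumes "x \<in> Field r" "y \<in> Field r" "\<not> lt r x y" shows "(y,x) \<in> r"
proof (cases "x = y")
  case True thus ?thesis using refl assms by auto
next
  case False thus ?thesis using total[OF assms(1,2)] assms(3) unfolding lt_def by auto
qed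
lemma not_le: assumes "x \<in> Field r" "y \<in> Field r" "(x,y) \<notin> r" shows "lt r y x"
proof -
  have "(y,x) \<in> r" using total[OF assms(1,2)] assms(3) by auto
  moreover have "x \<noteq> y" using refl assms by auto
  ultimately show ?thesis unfolding lt_def by auto
qed
lemma lt_not_le: "lt r x y \<Longrightarrow> (y,x) \<notin> r"
  unfolding lt_def using antisym by auto
lemma underS_lt: "underS r a = {x. lt r x a}"
  unfolding underS_def lt_def by auto
lemma under_le: "under r a = {x. (x,a) \<in> r}"
  unfolding under_def by auto

lemma wf_lt: "wf {(x,y). lt r x y}"
proof -
  have "{(x,y). lt r x y} = r - Id" unfolding lt_def by auto
  moreover have "wf (r - Id)" using wo_rel.WF[OF wo] .
  ultimately show ?thesis by simp
qed

lemma lt_induct: assumes "\<And>x. (\<And>y. lt r y x \<Longrightarrow> P y) \<Longrightarrow> P x" shows "P a"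
  by (rule wf_induct[OF wf_lt]) (use assms in auto)

lemma minex: assumes "B \<subseteq> Field r" "B \<noteq> {}" shows "\<exists>m\<in>B. \<forall>b\<in>B. (m,b) \<in> r"
proof (rule bexI[of _ "wo_rel.minim r B"])
  show "wo_rel.minim r B \<in> B" using wo_rel.minim_in[OF wo assms] .
  show "\<forall>b\<in>B. (wo_rel.minim r B, b) \<in> r" using wo_rel.minim_least[OF wo assms(1)] by blast
qed

lemma no_max: "x \<in> Field r \<Longrightarrow> \<exists>y. lt r x y"
proof (rule ccontr)
  assume x: "x \<in> Field r" and n: "\<not> (\<exists>y. lt r x y)"
  have "Field r = under r x"
  proof
    show "Field r \<subseteq> under r x" using n not_lt x unfolding under_def by blast
    show "under r x \<subseteq> Field r" unfolding under_def Field_def by auto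
  qed
  thus False using Card_order_infinite_not_under[OF CO infF] by blast
qed

lemma countable_small: "countable X \<Longrightarrow> |X| <o r"
proof (rule ccontr)
  assume c: "countable X" and n: "\<not> |X| <o r"
  have "r \<le>o |X|" using n not_ordLess_iff_ordLeq[OF WO card_of_Well_order] by blast
  hence "|Field r| \<le>o |X|" using card_of_Field_ordIso[OF CO] ordIso_ordLeq_trans by blast
  then obtain f where "inj_on f (Field r)" "f ` Field r \<subseteq> X" using card_of_ordLeq by metis
  hence "countable (Field r)" using c countable_subset countable_image_inj_on by metis
  thus False using uncount by simp
qed

lemma bounded_small:
  assumes X: "X \<subseteq> Field r" and s: "|X| <o r"
  shows "\<exists>g\<in>Field r. \<forall>x\<in>X. lt r x g"
proof -
  have "\<not> (\<forall>\<beta>\<in>Field r. \<exists>\<gamma>\<in>X. lt r \<beta> \<gamma>)"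
  proof
    assume "\<forall>\<beta>\<in>Field r. \<exists>\<gamma>\<in>X. lt r \<beta> \<gamma>"
    hence "|X| =o r" using RU X unfolding regular_uncountable_def by blast
    thus False using s not_ordLess_ordIso by blast
  qed
  then obtain b where b: "b \<in> Field r" "\<forall>\<gamma>\<in>X. \<not> lt r b \<gamma>" by blast
  obtain g where g: "lt r b g" using no_max b(1) by blast
  have "\<forall>x\<in>X. lt r x g" using b X not_lt le_lt_trans g by blast
  thus ?thesis using g ltF2 by blast
qed

end


context KK begin

definition supr :: "'a set \<Rightarrow> 'a" where
  "supr B = (SOME m. m \<in> Field r \<and> (\<forall>b\<in>B. (b,m) \<in> r) \<and> (\<forall>y\<in>Field r. (\<forall>b\<in>B. (b,y) \<in> r) \<longrightarrow> (m,y) \<in> r))"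

lemma supr_props:
  assumes B: "B \<subseteq> Field r" and u: "u \<in> Field r" "\<forall>b\<in>B. (b,u) \<in> r"
  shows "supr B \<in> Field r \<and> (\<forall>b\<in>B. (b,supr B) \<in> r) \<and> (\<forall>y\<in>Field r. (\<forall>b\<in>B. (b,y) \<in> r) \<longrightarrow> (supr B,y) \<in> r)"
proof -
  let ?U = "{y\<in>Field r. \<forall>b\<in>B. (b,y) \<in> r}"
  obtain m where "m \<in> ?U" "\<forall>y\<in>?U. (m,y) \<in> r" using minex[of ?U] u by blast
  hence "\<exists>m. m \<in> Field r \<and> (\<forall>b\<in>B. (b,m) \<in> r) \<and> (\<forall>y\<in>Field r. (\<forall>b\<in>B. (b,y) \<in> r) \<longrightarrow> (m,y) \<in> r)" by blast
  thus ?thesis unfolding supr_def by (rule someI_ex)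
qed

lemma supr_lt:
  assumes B: "B \<subseteq> Field r" and u: "u \<in> Field r" "\<forall>b\<in>B. (b,u) \<in> r" and y: "lt r y (supr B)"
  shows "\<exists>b\<in>B. lt r y b"
proof (rule ccontr)
  assume "\<not> (\<exists>b\<in>B. lt r y b)"
  hence "\<forall>b\<in>B. (b,y) \<in> r" using B ltF1[OF y] not_lt by blast
  hence "(supr B, y) \<in> r" using supr_props[OF B u] ltF1[OF y] by blast
  thus False using y lt_not_le by blast
qed

lemma omega_sup:
  assumes F: "\<And>n. \<eta> n \<in> Field r" and inc: "\<And>n. lt r (\<eta> n) (\<eta> (Suc n))"
  shows "\<exists>\<delta>\<in>Field r. (\<forall>n. lt r (\<eta> n) \<delta>) \<and> (\<forall>\<zeta>. lt r \<zeta> \<delta> \<longrightarrow> (\<exists>n. lt r \<zeta> (\<eta> n)))"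
proof -
  have X: "range \<eta> \<subseteq> Field r" using F by auto
  obtain g where g: "g \<in> Field r" "\<forall>x\<in>range \<eta>. lt r x g"
    using bounded_small[OF X countable_small] by blast
  have u: "\<forall>b\<in>range \<eta>. (b,g) \<in> r" using g lt_le by blast
  note sp = supr_props[OF X g(1) u]
  show ?thesis
  proof (intro bexI conjI allI impI)
    show "supr (range \<eta>) \<in> Field r" using sp by blast
    fix n show "lt r (\<eta> n) (supr (range \<eta>))" using sp inc[of n] lt_le_trans by blast
  next
    fix \<zeta> assume "lt r \<zeta> (supr (range \<eta>))"
    thus "\<exists>n. lt r \<zeta> (\<eta> n)" using supr_lt[OF X g(1) u] by blast
  qed
qed

lemma acc_I:
  assumes "\<delta> \<in> Field r" "lt r x \<delta>" "\<And>\<zeta>. lt r \<zeta> \<delta> \<Longrightarrow> \<exists>y\<in>Y. lt r \<zeta> y \<and> lt r y \<delta>"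
  shows "\<delta> \<in> acc r Y"
  using assms unfolding acc_def sup_eq_def underS_lt by auto

lemma acc_D:
  assumes "\<alpha> \<in> acc r Y" "lt r \<beta> \<alpha>"
  shows "\<exists>y\<in>Y. lt r \<beta> y \<and> lt r y \<alpha>"
  using assms unfolding acc_def sup_eq_def underS_lt by auto

lemma acc_F: "\<alpha> \<in> acc r Y \<Longrightarrow> \<alpha> \<in> Field r" unfolding acc_def by auto

lemma acc_mono: "X \<subseteq> Y \<Longrightarrow> acc r X \<subseteq> acc r Y"
  unfolding acc_def sup_eq_def by blast

lemma acc_acc: "acc r (acc r X) \<subseteq> acc r X"
proof
  fix \<alpha> assume a: "\<alpha> \<in> acc r (acc r X)"
  obtain x where x: "lt r x \<alpha>" using a unfolding acc_def underS_lt by auto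
  show "\<alpha> \<in> acc r X"
  proof (rule acc_I[OF acc_F[OF a] x])
    fix \<zeta> assume z: "lt r \<zeta> \<alpha>"
    then obtain y where y: "y \<in> acc r X" "lt r \<zeta> y" "lt r y \<alpha>" using acc_D[OF a] by blast
    then obtain w where "w \<in> X" "lt r \<zeta> w" "lt r w y" using acc_D by blast
    thus "\<exists>y\<in>X. lt r \<zeta> y \<and> lt r y \<alpha>" using y lt_trans by blast
  qed
qed

lemma club_Field: "club r (Field r)"
  unfolding club_def using no_max ltF2 acc_F by blast

lemma acc_club:
  assumes X: "X \<subseteq> Field r" and unb: "\<forall>\<beta>\<in>Field r. \<exists>x\<in>X. lt r \<beta> x"
  shows "club r (acc r X)"
  unfolding club_def
proof (intro conjI ballI)
  show "acc r X \<subseteq> Field r" using acc_F by blast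
  show "acc r (acc r X) \<subseteq> acc r X" by (rule acc_acc)
  fix \<beta> assume b: "\<beta> \<in> Field r"
  define nx where "nx = (\<lambda>y. SOME x. x \<in> X \<and> lt r y x)"
  have nx: "\<And>y. y \<in> Field r \<Longrightarrow> nx y \<in> X \<and> lt r y (nx y)"
    unfolding nx_def using unb by (metis (mono_tags, lifting) someI_ex)
  define \<eta> where "\<eta> = rec_nat \<beta> (\<lambda>_ y. nx y)"
  have e0: "\<eta> 0 = \<beta>" and eS: "\<And>n. \<eta> (Suc n) = nx (\<eta> n)" unfolding \<eta>_def by auto
  have F: "\<And>n. \<eta> n \<in> Field r"
  proof -
    fix n show "\<eta> n \<in> Field r" by (induct n) (use b e0 eS nx X in auto)
  qed
  have inc: "\<And>n. lt r (\<eta> n) (\<eta> (Suc n))" using eS nx F by auto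
  obtain \<delta> where d: "\<delta> \<in> Field r" "\<forall>n. lt r (\<eta> n) \<delta>" "\<forall>\<zeta>. lt r \<zeta> \<delta> \<longrightarrow> (\<exists>n. lt r \<zeta> (\<eta> n))"
    using omega_sup[of \<eta>, OF F inc] by blast
  have "\<delta> \<in> acc r X"
  proof (rule acc_I[OF d(1)])
    show "lt r (\<eta> 0) \<delta>" using d by blast
    fix \<zeta> assume "lt r \<zeta> \<delta>"
    then obtain n where n: "lt r \<zeta> (\<eta> n)" using d by blast
    have "\<eta> (Suc n) \<in> X" using eS nx F by auto
    moreover have "lt r \<zeta> (\<eta> (Suc n))" using n inc lt_trans by blast
    ultimately show "\<exists>y\<in>X. lt r \<zeta> y \<and> lt r y \<delta>" using d by blast
  qed
  moreover have "lt r \<beta> \<delta>" using d e0 by metis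
  ultimately show "\<exists>\<gamma>\<in>acc r X. lt r \<beta> \<gamma>" by blast
qed

lemma club_inter:
  assumes cl: "\<forall>C\<in>FF. club r C" and sm: "|FF| <o r"
  shows "club r (Field r \<inter> \<Inter>FF)"
  unfolding club_def
proof (intro conjI ballI)
  show "Field r \<inter> \<Inter> FF \<subseteq> Field r" by blast
  show "acc r (Field r \<inter> \<Inter> FF) \<subseteq> Field r \<inter> \<Inter> FF"
  proof
    fix \<alpha> assume a: "\<alpha> \<in> acc r (Field r \<inter> \<Inter> FF)"
    have "\<forall>C\<in>FF. \<alpha> \<in> C"
    proof
      fix C assume C: "C \<in> FF"
      have "acc r (Field r \<inter> \<Inter> FF) \<subseteq> acc r C" by (rule acc_mono) (use C in blast)
      thus "\<alpha> \<in> C" using a cl C unfolding club_def by blast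
    qed
    thus "\<alpha> \<in> Field r \<inter> \<Inter> FF" using acc_F[OF a] by blast
  qed
  fix \<beta> assume b: "\<beta> \<in> Field r"
  define nx where "nx = (\<lambda>C y. SOME c. c \<in> C \<and> lt r y c)"
  have nx: "\<And>C y. C \<in> FF \<Longrightarrow> y \<in> Field r \<Longrightarrow> nx C y \<in> C \<and> lt r y (nx C y)"
  proof -
    fix C y assume "C \<in> FF" "y \<in> Field r"
    hence "\<exists>c. c \<in> C \<and> lt r y c" using cl unfolding club_def by blast
    thus "nx C y \<in> C \<and> lt r y (nx C y)" unfolding nx_def by (rule someI_ex)
  qed
  have hex: "\<And>y. y \<in> Field r \<Longrightarrow> \<exists>g\<in>Field r. lt r y g \<and> (\<forall>C\<in>FF. lt r (nx C y) g)"
  proof -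
    fix y assume y: "y \<in> Field r"
    have sub: "(\<lambda>C. nx C y) ` FF \<subseteq> Field r" using nx y cl ltF2 by blast
    have "|(\<lambda>C. nx C y) ` FF| <o r" using card_of_image sm ordLeq_ordLess_trans by blast
    then obtain g1 where g1: "g1 \<in> Field r" "\<forall>x\<in>(\<lambda>C. nx C y) ` FF. lt r x g1"
      using bounded_small[OF sub] by blast
    obtain g2 where g2: "lt r y g2" using no_max y by blast
    show "\<exists>g\<in>Field r. lt r y g \<and> (\<forall>C\<in>FF. lt r (nx C y) g)"
    proof (cases "(g1,g2) \<in> r")
      case True
      thus ?thesis using g1 g2 lt_le_trans ltF2 by blast
    next
      case False
      hence "lt r g2 g1" using not_le g1(1) ltF2[OF g2] by blast
      thus ?thesis using g1 g2 lt_trans by blast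
    qed
  qed
  define h where "h = (\<lambda>y. SOME g. g\<in>Field r \<and> lt r y g \<and> (\<forall>C\<in>FF. lt r (nx C y) g))"
  have h: "\<And>y. y \<in> Field r \<Longrightarrow> h y \<in> Field r \<and> lt r y (h y) \<and> (\<forall>C\<in>FF. lt r (nx C y) (h y))"
  proof -
    fix y assume "y \<in> Field r"
    hence "\<exists>g. g\<in>Field r \<and> lt r y g \<and> (\<forall>C\<in>FF. lt r (nx C y) g)" using hex by blast
    thus "h y \<in> Field r \<and> lt r y (h y) \<and> (\<forall>C\<in>FF. lt r (nx C y) (h y))" unfolding h_def by (rule someI_ex)
  qed
  define \<eta> where "\<eta> = rec_nat \<beta> (\<lambda>_ y. h y)"
  have e0: "\<eta> 0 = \<beta>" and eS: "\<And>n. \<eta> (Suc n) = h (\<eta> n)" unfolding \<eta>_def by auto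
  have F: "\<And>n. \<eta> n \<in> Field r"
  proof -
    fix n show "\<eta> n \<in> Field r" by (induct n) (use b e0 eS h in auto)
  qed
  have inc: "\<And>n. lt r (\<eta> n) (\<eta> (Suc n))" using eS h F by auto
  obtain \<delta> where d: "\<delta> \<in> Field r" "\<forall>n. lt r (\<eta> n) \<delta>" "\<forall>\<zeta>. lt r \<zeta> \<delta> \<longrightarrow> (\<exists>n. lt r \<zeta> (\<eta> n))"
    using omega_sup[of \<eta>, OF F inc] by blast
  have "\<forall>C\<in>FF. \<delta> \<in> C"
  proof
    fix C assume C: "C \<in> FF"
    have "\<delta> \<in> acc r C"
    proof (rule acc_I[OF d(1)])
      show "lt r (\<eta> 0) \<delta>" using d by blast
      fix \<zeta> assume "lt r \<zeta> \<delta>"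
      then obtain n where n: "lt r \<zeta> (\<eta> n)" using d by blast
      have "nx C (\<eta> n) \<in> C" "lt r (\<eta> n) (nx C (\<eta> n))" "lt r (nx C (\<eta> n)) (\<eta> (Suc n))"
        using nx[OF C F] h[OF F] eS C by auto
      moreover have "lt r (\<eta> (Suc n)) \<delta>" using d by blast
      ultimately show "\<exists>y\<in>C. lt r \<zeta> y \<and> lt r y \<delta>" using n lt_trans by blast
    qed
    thus "\<delta> \<in> C" using cl C unfolding club_def by blast
  qed
  moreover have "lt r \<beta> \<delta>" using d e0 by metis
  ultimately show "\<exists>\<gamma>\<in>Field r \<inter> \<Inter> FF. lt r \<beta> \<gamma>" using d(1) by blast
qed

end


context KK begin
lemma fin_small: assumes "finite A" "infinite B" shows "|A| <o |B|"
proof -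
  have 1: "Well_order |A|" "Well_order |B|" by (rule card_of_Well_order)+
  have 2: "finite (Field |A| )" unfolding Field_card_of by (rule assms(1))
  have 3: "infinite (Field |B| )" unfolding Field_card_of by (rule assms(2))
  show ?thesis by (rule finite_ordLess_infinite[OF 1 2 3])
qed
lemma rec_eq:
  assumes "\<And>g g' i. (\<And>j. lt r j i \<Longrightarrow> g j = g' j) \<Longrightarrow> H g i = H g' i"
  shows "wfrec {(x,y). lt r x y} (H :: ('a \<Rightarrow> 'b) \<Rightarrow> 'a \<Rightarrow> 'b) i = H (wfrec {(x,y). lt r x y} H) i"
proof -
  have adm: "adm_wf {(x,y). lt r x y} H" unfolding adm_wf_def
  proof (intro allI impI)
    fix f g :: "'a \<Rightarrow> 'b" and x assume h: "\<forall>z. (z, x) \<in> {(x,y). lt r x y} \<longrightarrow> f z = g z"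
    show "H f x = H g x" by (rule assms) (use h in simp)
  qed
  show ?thesis using fun_cong[OF wfrec_fixpoint[OF wf_lt adm]] .
qed

lemma ric_F: "regular_infinite_cardinal r x \<Longrightarrow> x \<in> Field r"
  unfolding regular_infinite_cardinal_def by auto

lemma ric_lim: assumes "regular_infinite_cardinal r x" "lt r j x" shows "\<exists>j'. lt r j j' \<and> lt r j' x"
proof -
  obtain A where "sup_eq r A x" using assms(1) unfolding regular_infinite_cardinal_def cf_eq_def by blast
  thus ?thesis using assms(2) unfolding sup_eq_def underS_lt by blast
qed

lemma ric_ne: assumes "regular_infinite_cardinal r x" shows "\<exists>j. lt r j x"
proof -
  have "infinite (underS r x)" using assms unfolding regular_infinite_cardinal_def by auto
  then obtain j where "j \<in> underS r x" by (metis finite.emptyI ex_in_conv)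
  thus ?thesis unfolding underS_lt by auto
qed

lemma ric_bound:
  assumes R: "regular_infinite_cardinal r x" and M: "M \<subseteq> underS r x" and s: "|M| <o |underS r x|"
  shows "\<exists>i0. lt r i0 x \<and> (\<forall>m\<in>M. (m,i0) \<in> r)"
proof (rule ccontr)
  assume n: "\<not> ?thesis"
  have "sup_eq r M x" unfolding sup_eq_def
  proof (intro conjI allI impI)
    show "M \<subseteq> underS r x" by fact
    fix b assume b: "lt r b x"
    then obtain m where m: "m \<in> M" "(m,b) \<notin> r" using n by blast
    have "m \<in> Field r" using m M unfolding underS_lt using ltF1 by blast
    thus "\<exists>g\<in>M. lt r b g" using not_le[OF _ ltF1[OF b]] m by blast
  qed
  hence "|underS r x| \<le>o |M|" using R unfolding regular_infinite_cardinal_def cf_eq_def by blast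
  thus False using s not_ordLess_ordLeq by blast
qed

lemma small_underS: "x \<in> Field r \<Longrightarrow> |underS r x| <o r" using card_of_underS[OF CO] .

lemma max_idx: assumes "lt r a x" "lt r b x" shows "\<exists>c. lt r c x \<and> (a,c) \<in> r \<and> (b,c) \<in> r"
proof (cases "(a,b) \<in> r")
  case True
  have "(b,b) \<in> r" using refl[OF ltF1[OF assms(2)]] .
  thus ?thesis using assms(2) True by blast
next
  case False
  have "(b,a) \<in> r" using lt_le[OF not_le[OF ltF1[OF assms(1)] ltF1[OF assms(2)] False]] .
  moreover have "(a,a) \<in> r" using refl[OF ltF1[OF assms(1)]] .
  ultimately show ?thesis using assms(1) by blast
qed

end

locale KK2 = KK +
  fixes \<theta> \<rho> :: 'a and K :: "'a set set"
  assumes RT: "regular_infinite_cardinal r \<theta>" and RR: "regular_infinite_cardinal r \<rho>"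
    and TR: "lt r \<theta> \<rho>" and ID: "is_ideal r K" and KC: "kappa_complete r K"
    and NSK: "NS_restr r \<theta> \<subseteq> K"
begin

abbreviation "Eg \<equiv> E_ge r \<rho>"

lemma rhoF: "\<rho> \<in> Field r" using ric_F[OF RR] .
lemma infR: "infinite (underS r \<rho>)" using RR unfolding regular_infinite_cardinal_def by auto

lemma Eg_F: "Eg \<subseteq> Field r" unfolding E_ge_def acc_def by auto

lemma notEg: assumes "\<alpha> \<in> E_eq r \<theta>" shows "\<alpha> \<notin> Eg"
proof
  assume g: "\<alpha> \<in> Eg"
  obtain B where B: "sup_eq r B \<alpha>" "|B| =o |underS r \<theta>|" using assms unfolding E_eq_def cf_eq_def by blast
  have "|underS r \<rho>| \<le>o |B|" using g B(1) unfolding E_ge_def cf_ge_def by blast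
  hence "|underS r \<rho>| \<le>o |underS r \<theta>|" using B(2) ordLeq_ordIso_trans by blast
  moreover have "|underS r \<theta>| <o |underS r \<rho>|" using RR TR unfolding regular_infinite_cardinal_def by blast
  ultimately show False using not_ordLess_ordLeq by blast
qed

lemma Eg_unb:
  assumes C: "club r C" and b: "\<beta> \<in> Field r"
  shows "\<exists>\<gamma>\<in>C \<inter> Eg. lt r \<beta> \<gamma>"
proof -
  have CF: "C \<subseteq> Field r" and Cu: "\<forall>\<beta>\<in>Field r. \<exists>\<gamma>\<in>C. lt r \<beta> \<gamma>" and Cc: "acc r C \<subseteq> C"
    using C unfolding club_def by auto
  define H where "H = (\<lambda>(g::'a\<Rightarrow>'a) i. SOME y. y \<in> C \<and> lt r \<beta> y \<and> (\<forall>j. lt r j i \<longrightarrow> lt r (g j) y))"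
  define f where "f = wfrec {(x,y). lt r x y} H"
  have feq: "\<And>i. f i = (SOME y. y \<in> C \<and> lt r \<beta> y \<and> (\<forall>j. lt r j i \<longrightarrow> lt r (f j) y))"
  proof -
    fix i
    have "f i = H f i" unfolding f_def
      by (rule rec_eq) (unfold H_def, simp)
    thus "f i = (SOME y. y \<in> C \<and> lt r \<beta> y \<and> (\<forall>j. lt r j i \<longrightarrow> lt r (f j) y))" unfolding H_def by simp
  qed
  have fP: "\<And>i. i \<in> Field r \<Longrightarrow> f i \<in> C \<and> lt r \<beta> (f i) \<and> (\<forall>j. lt r j i \<longrightarrow> lt r (f j) (f i))"
  proof -
    fix i
    show "i \<in> Field r \<Longrightarrow> f i \<in> C \<and> lt r \<beta> (f i) \<and> (\<forall>j. lt r j i \<longrightarrow> lt r (f j) (f i))"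
    proof (induct i rule: lt_induct)
      case (1 i)
      have IH: "\<And>j. lt r j i \<Longrightarrow> f j \<in> C" using 1 ltF1 by blast
      have sub: "f ` underS r i \<subseteq> Field r" using IH CF unfolding underS_lt by blast
      have "|f ` underS r i| <o r" using card_of_image small_underS[OF 1(2)] ordLeq_ordLess_trans by blast
      then obtain g1 where g1: "g1 \<in> Field r" "\<forall>x\<in>f ` underS r i. lt r x g1" using bounded_small[OF sub] by blast
      define u where "u = (if (g1,\<beta>) \<in> r then \<beta> else g1)"
      have u: "u \<in> Field r \<and> (g1,u) \<in> r \<and> (\<beta>,u) \<in> r"
      proof (cases "(g1,\<beta>) \<in> r")
        case True thus ?thesis unfolding u_def using b refl[OF b] by simp
      next
        case False thus ?thesis unfolding u_def using g1(1) refl[OF g1(1)] lt_le[OF not_le[OF g1(1) b False]] by simp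
      qed
      hence u: "u \<in> Field r" "(g1,u) \<in> r" "(\<beta>,u) \<in> r" by auto
      obtain y where y: "y \<in> C" "lt r u y" using Cu u(1) by blast
      have "y \<in> C \<and> lt r \<beta> y \<and> (\<forall>j. lt r j i \<longrightarrow> lt r (f j) y)"
      proof (intro conjI allI impI)
        show "y \<in> C" by fact
        show "lt r \<beta> y" using le_lt_trans[OF u(3) y(2)] .
        fix j assume "lt r j i"
        hence "lt r (f j) g1" using g1 unfolding underS_lt by blast
        thus "lt r (f j) y" using lt_trans[OF lt_le_trans[OF _ u(2)] y(2)] by blast
      qed
      hence "\<exists>y. y \<in> C \<and> lt r \<beta> y \<and> (\<forall>j. lt r j i \<longrightarrow> lt r (f j) y)" by blast
      from someI_ex[OF this] show ?case using feq[of i] by simp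
    qed
  qed
  have fF: "\<And>i. lt r i \<rho> \<Longrightarrow> f i \<in> Field r" using fP ltF1 CF by blast
  have sub: "f ` underS r \<rho> \<subseteq> Field r" using fF unfolding underS_lt by blast
  have "|f ` underS r \<rho>| <o r" using card_of_image small_underS[OF rhoF] ordLeq_ordLess_trans by blast
  then obtain g where g: "g \<in> Field r" "\<forall>x\<in>f ` underS r \<rho>. lt r x g" using bounded_small[OF sub] by blast
  have gu: "\<forall>x\<in>f ` underS r \<rho>. (x,g) \<in> r" using g lt_le by blast
  define \<delta> where "\<delta> = supr (f ` underS r \<rho>)"
  note sp = supr_props[OF sub g(1) gu, folded \<delta>_def]
  note sl = supr_lt[OF sub g(1) gu, folded \<delta>_def]
  have fle: "\<And>j. lt r j \<rho> \<Longrightarrow> (f j, \<delta>) \<in> r" using sp unfolding underS_lt by blast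
  have flt: "\<And>j. lt r j \<rho> \<Longrightarrow> lt r (f j) \<delta>"
  proof -
    fix j assume j: "lt r j \<rho>"
    then obtain j' where j': "lt r j j'" "lt r j' \<rho>" using ric_lim[OF RR] by blast
    have "lt r (f j) (f j')" using fP[OF ltF1[OF j'(2)]] j'(1) by blast
    thus "lt r (f j) \<delta>" using fle[OF j'(2)] lt_le_trans by blast
  qed
  obtain j0 where j0: "lt r j0 \<rho>" using ric_ne[OF RR] by blast
  have dacc: "\<delta> \<in> acc r C"
  proof (rule acc_I)
    show "\<delta> \<in> Field r" using sp by blast
    show "lt r (f j0) \<delta>" using flt[OF j0] .
    fix \<zeta> assume "lt r \<zeta> \<delta>"
    then obtain b where "b \<in> f ` underS r \<rho>" "lt r \<zeta> b" using sl by blast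
    then obtain j where j: "lt r j \<rho>" "lt r \<zeta> (f j)" unfolding underS_lt by blast
    thus "\<exists>y\<in>C. lt r \<zeta> y \<and> lt r y \<delta>" using fP[OF ltF1[OF j(1)]] flt[OF j(1)] by blast
  qed
  have dC: "\<delta> \<in> C" using dacc Cc by blast
  have daccF: "\<delta> \<in> acc r (Field r)" using acc_mono[OF CF] dacc by blast
  have dcf: "cf_ge r \<delta> \<rho>" unfolding cf_ge_def
  proof (intro allI impI)
    fix B assume B: "sup_eq r B \<delta>"
    have Bsub: "B \<subseteq> underS r \<delta>" and Bcof: "\<forall>x. lt r x \<delta> \<longrightarrow> (\<exists>y\<in>B. lt r x y)" using B unfolding sup_eq_def by auto
    have ex: "\<And>b. b \<in> B \<Longrightarrow> \<exists>i. lt r i \<rho> \<and> lt r b (f i)"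
    proof -
      fix b assume "b \<in> B"
      hence "lt r b \<delta>" using Bsub unfolding underS_lt by blast
      then obtain x where "x \<in> f ` underS r \<rho>" "lt r b x" using sl by blast
      thus "\<exists>i. lt r i \<rho> \<and> lt r b (f i)" unfolding underS_lt by blast
    qed
    define ib where "ib = (\<lambda>b. SOME i. lt r i \<rho> \<and> lt r b (f i))"
    have ib: "\<And>b. b \<in> B \<Longrightarrow> lt r (ib b) \<rho> \<and> lt r b (f (ib b))"
      unfolding ib_def using ex by (metis (mono_tags, lifting) someI_ex)
    have "sup_eq r (ib ` B) \<rho>" unfolding sup_eq_def
    proof (intro conjI allI impI)
      show "ib ` B \<subseteq> underS r \<rho>" using ib unfolding underS_lt by blast
      fix j assume j: "lt r j \<rho>"
      then obtain b where b: "b \<in> B" "lt r (f j) b" using Bcof flt by blast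
      have i: "lt r (ib b) \<rho>" "lt r b (f (ib b))" using ib[OF b(1)] by auto
      have fj: "lt r (f j) (f (ib b))" using b(2) i(2) lt_trans by blast
      have "lt r j (ib b)"
      proof (rule ccontr)
        assume "\<not> lt r j (ib b)"
        hence "(ib b, j) \<in> r" using not_lt ltF1 j i(1) by blast
        hence "ib b = j \<or> lt r (ib b) j" unfolding lt_def by blast
        thus False
        proof
          assume "ib b = j" thus False using fj lt_irr by simp
        next
          assume "lt r (ib b) j"
          hence "lt r (f (ib b)) (f j)" using fP[OF ltF1[OF j]] by blast
          thus False using fj lt_trans lt_irr by blast
        qed
      qed
      thus "\<exists>g\<in>ib ` B. lt r j g" using b by blast
    qed
    hence "|underS r \<rho>| \<le>o |ib ` B|" using RR unfolding regular_infinite_cardinal_def cf_eq_def by blast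
    thus "|underS r \<rho>| \<le>o |B|" using card_of_image ordLeq_transitive by blast
  qed
  have "\<delta> \<in> Eg" unfolding E_ge_def using daccF dcf by blast
  moreover have "lt r \<beta> \<delta>" using fP[OF ltF1[OF j0]] flt[OF j0] lt_trans by blast
  ultimately show ?thesis using dC by blast
qed

end


context KK2 begin

definition Lset :: "'a \<Rightarrow> 'a set" where
  "Lset x = (SOME B. B \<subseteq> underS r x \<and> (\<forall>a. lt r a x \<longrightarrow> (\<exists>\<gamma>\<in>B. (a,\<gamma>) \<in> r)) \<and> |B| <o |underS r \<rho>| )"

lemma Lset_props:
  assumes x: "x \<in> Field r" and nx: "x \<notin> Eg"
  shows "Lset x \<subseteq> underS r x \<and> (\<forall>a. lt r a x \<longrightarrow> (\<exists>\<gamma>\<in>Lset x. (a,\<gamma>) \<in> r)) \<and> |Lset x| <o |underS r \<rho>|"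
proof -
  have "\<exists>B. B \<subseteq> underS r x \<and> (\<forall>a. lt r a x \<longrightarrow> (\<exists>\<gamma>\<in>B. (a,\<gamma>) \<in> r)) \<and> |B| <o |underS r \<rho>|"
  proof (cases "x \<in> acc r (Field r)")
    case True
    hence "\<not> cf_ge r x \<rho>" using nx unfolding E_ge_def by blast
    then obtain B where B: "sup_eq r B x" "\<not> |underS r \<rho>| \<le>o |B|" unfolding cf_ge_def by blast
    have "|B| <o |underS r \<rho>|" using B(2) not_ordLeq_iff_ordLess[OF card_of_Well_order card_of_Well_order] by blast
    moreover have "B \<subseteq> underS r x" using B(1) unfolding sup_eq_def by blast
    moreover have "\<forall>a. lt r a x \<longrightarrow> (\<exists>\<gamma>\<in>B. (a,\<gamma>) \<in> r)" using B(1) lt_le unfolding sup_eq_def by blast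
    ultimately show ?thesis by blast
  next
    case False
    show ?thesis
    proof (cases "underS r x = {}")
      case True
      have "|{}::'a set| <o |underS r \<rho>|" using fin_small infR by blast
      thus ?thesis using True unfolding underS_lt by auto
    next
      case ne: False
      have "\<not> sup_eq r (Field r \<inter> underS r x) x" using False ne x unfolding acc_def by blast
      then obtain b where b: "lt r b x" "\<not> (\<exists>g\<in>Field r \<inter> underS r x. lt r b g)"
        unfolding sup_eq_def by blast
      have "\<forall>a. lt r a x \<longrightarrow> (\<exists>\<gamma>\<in>{b}. (a,\<gamma>) \<in> r)"
      proof (intro allI impI)
        fix a assume a: "lt r a x"
        have "\<not> lt r b a" using b a ltF1 unfolding underS_lt by blast
        hence "(a,b) \<in> r" using not_lt[OF ltF1[OF b(1)] ltF1[OF a]] by blast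
        thus "\<exists>\<gamma>\<in>{b}. (a,\<gamma>) \<in> r" by blast
      qed
      moreover have "{b} \<subseteq> underS r x" using b unfolding underS_lt by blast
      moreover have "|{b}| <o |underS r \<rho>|" using fin_small infR by blast
      ultimately show ?thesis by blast
    qed
  qed
  thus ?thesis unfolding Lset_def by (rule someI_ex)
qed

definition LvH :: "'a set \<Rightarrow> ('a \<Rightarrow> 'a set) \<Rightarrow> 'a \<Rightarrow> 'a set" where
  "LvH A g x = (if x \<in> Eg then (if x \<in> A then {x} else {}) else
     (\<Union>\<gamma>\<in>Lset x. (if A \<inter> under r \<gamma> = {} then {} else
        if lt r (supr (A \<inter> under r \<gamma>)) x then g (supr (A \<inter> under r \<gamma>)) else {})))"

definition Lv :: "'a set \<Rightarrow> 'a \<Rightarrow> 'a set" where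
  "Lv A = wfrec {(x,y). lt r x y} (LvH A)"

definition part :: "'a set \<Rightarrow> 'a \<Rightarrow> 'a \<Rightarrow> 'a set" where
  "part A x \<gamma> = (if A \<inter> under r \<gamma> = {} then {} else
        if lt r (supr (A \<inter> under r \<gamma>)) x then Lv A (supr (A \<inter> under r \<gamma>)) else {})"

lemma Lv_eq: "Lv A x = (if x \<in> Eg then (if x \<in> A then {x} else {}) else (\<Union>\<gamma>\<in>Lset x. part A x \<gamma>))"
proof -
  have "Lv A x = LvH A (Lv A) x" unfolding Lv_def
  proof (rule rec_eq)
    fix g g' :: "'a \<Rightarrow> 'a set" and i assume h: "\<And>j. lt r j i \<Longrightarrow> g j = g' j"
    show "LvH A g i = LvH A g' i" unfolding LvH_def using h by (simp cong: SUP_cong if_cong)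
  qed
  thus ?thesis unfolding LvH_def part_def by simp
qed

lemma Lv_sub: "Lv A x \<subseteq> A \<and> (\<forall>l\<in>Lv A x. l = x \<or> lt r l x)"
proof (induct x rule: lt_induct)
  case (1 x)
  show ?case
  proof (cases "x \<in> Eg")
    case True thus ?thesis using Lv_eq[of A x] by auto
  next
    case False
    have pp: "\<And>\<gamma>. part A x \<gamma> \<subseteq> A \<and> (\<forall>l\<in>part A x \<gamma>. lt r l x)"
    proof -
      fix \<gamma>
      show "part A x \<gamma> \<subseteq> A \<and> (\<forall>l\<in>part A x \<gamma>. lt r l x)"
      proof (cases "A \<inter> under r \<gamma> = {} \<or> \<not> lt r (supr (A \<inter> under r \<gamma>)) x")
        case True thus ?thesis unfolding part_def by auto
      next
        case F2: False
        define s where "s = supr (A \<inter> under r \<gamma>)"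
        have p: "part A x \<gamma> = Lv A s" using F2 unfolding part_def s_def by auto
        have s: "lt r s x" using F2 unfolding s_def by blast
        have ih: "Lv A s \<subseteq> A \<and> (\<forall>l\<in>Lv A s. l = s \<or> lt r l s)" using 1[OF s] .
        have "\<forall>l\<in>Lv A s. lt r l x"
        proof
          fix l assume "l \<in> Lv A s"
          hence "l = s \<or> lt r l s" using ih by blast
          thus "lt r l x" using s lt_trans[OF _ s] by auto
        qed
        thus ?thesis using p ih by simp
      qed
    qed
    have "Lv A x = (\<Union>\<gamma>\<in>Lset x. part A x \<gamma>)" using Lv_eq[of A x] False by simp
    thus ?thesis using pp by auto
  qed
qed

lemma Lv_cof:
  assumes ClF: "Cl \<subseteq> Field r" and Clc: "acc r Cl \<subseteq> Cl"
  shows "x \<in> Field r \<Longrightarrow> x \<notin> Eg \<Longrightarrow> (\<forall>\<eta>. lt r \<eta> x \<longrightarrow> (\<exists>a\<in>Cl \<inter> Eg. lt r \<eta> a \<and> lt r a x))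
     \<Longrightarrow> (\<forall>\<eta>. lt r \<eta> x \<longrightarrow> (\<exists>l\<in>Lv (Cl \<inter> Eg) x. lt r \<eta> l))"
proof (induct x rule: lt_induct)
  case (1 x)
  let ?A = "Cl \<inter> Eg"
  show ?case
  proof (intro allI impI)
    fix \<eta> assume e: "lt r \<eta> x"
    obtain a where a: "a \<in> ?A" "lt r \<eta> a" "lt r a x" using 1(4) e by blast
    obtain \<gamma> where g: "\<gamma> \<in> Lset x" "(a,\<gamma>) \<in> r" using Lset_props[OF 1(2) 1(3)] a(3) by blast
    have gx: "lt r \<gamma> x" using Lset_props[OF 1(2) 1(3)] g(1) unfolding underS_lt by blast
    let ?B = "?A \<inter> under r \<gamma>"
    have aB: "a \<in> ?B" using a g unfolding under_le by blast
    have BF: "?B \<subseteq> Field r" using ClF by blast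
    have gF: "\<gamma> \<in> Field r" using ltF1[OF gx] .
    have gu: "\<forall>b\<in>?B. (b,\<gamma>) \<in> r" unfolding under_le by blast
    let ?s = "supr ?B"
    note sp = supr_props[OF BF gF gu]
    note sl = supr_lt[OF BF gF gu]
    have as: "(a, ?s) \<in> r" using sp aB by blast
    have sg: "(?s, \<gamma>) \<in> r" using sp gF gu by blast
    have sx: "lt r ?s x" using le_lt_trans[OF sg gx] .
    have es: "lt r \<eta> ?s" using lt_le_trans[OF a(2) as] .
    have pe: "part ?A x \<gamma> = Lv ?A ?s" unfolding part_def using aB sx by auto
    have sub: "Lv ?A ?s \<subseteq> Lv ?A x" using Lv_eq[of ?A x] 1(3) pe g(1) by auto
    show "\<exists>l\<in>Lv ?A x. lt r \<eta> l"
    proof (cases "?s \<in> ?A")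
      case True
      hence "Lv ?A ?s = {?s}" using Lv_eq[of ?A ?s] by auto
      thus ?thesis using sub es by blast
    next
      case False
      have cof: "\<forall>\<eta>'. lt r \<eta>' ?s \<longrightarrow> (\<exists>b\<in>?A. lt r \<eta>' b \<and> lt r b ?s)"
      proof (intro allI impI)
        fix \<eta>' assume "lt r \<eta>' ?s"
        then obtain b where b: "b \<in> ?B" "lt r \<eta>' b" using sl by blast
        have "(b, ?s) \<in> r" using sp b(1) by blast
        moreover have "b \<noteq> ?s" using b(1) False by blast
        ultimately show "\<exists>b\<in>?A. lt r \<eta>' b \<and> lt r b ?s" using b unfolding lt_def by blast
      qed
      have sacc: "?s \<in> acc r Cl"
      proof (rule acc_I)
        show "?s \<in> Field r" using sp by blast
        show "lt r \<eta> ?s" by fact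
        fix \<zeta> assume "lt r \<zeta> ?s"
        thus "\<exists>y\<in>Cl. lt r \<zeta> y \<and> lt r y ?s" using cof by blast
      qed
      hence "?s \<in> Cl" using Clc by blast
      hence nE: "?s \<notin> Eg" using False by blast
      have "\<forall>\<eta>. lt r \<eta> ?s \<longrightarrow> (\<exists>l\<in>Lv ?A ?s. lt r \<eta> l)"
        using 1(1)[OF sx] sp nE cof by blast
      thus ?thesis using es sub by blast
    qed
  qed
qed

definition stab :: "('a \<Rightarrow> 'b) \<Rightarrow> bool" where
  "stab f \<longleftrightarrow> (\<exists>i0. lt r i0 \<rho> \<and> (\<forall>i. lt r i \<rho> \<longrightarrow> (i0,i) \<in> r \<longrightarrow> f i = f i0))"

lemma supr_mono:
  assumes "B' \<subseteq> B" "B \<subseteq> Field r" "u \<in> Field r" "\<forall>b\<in>B. (b,u) \<in> r"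
  shows "(supr B', supr B) \<in> r"
proof -
  have B'F: "B' \<subseteq> Field r" using assms by blast
  have u': "\<forall>b\<in>B'. (b,u) \<in> r" using assms by blast
  note s1 = supr_props[OF B'F assms(3) u']
  note s2 = supr_props[OF assms(2) assms(3) assms(4)]
  have "supr B \<in> Field r" "\<forall>b\<in>B'. (b, supr B) \<in> r" using s2 assms(1) by blast+
  thus ?thesis using s1 by blast
qed

lemma Lv_stab:
  assumes dec: "\<And>i j. lt r j \<rho> \<Longrightarrow> lt r i \<rho> \<Longrightarrow> (j,i) \<in> r \<Longrightarrow> As i \<subseteq> As j"
    and AF: "\<And>i. As i \<subseteq> Field r"
  shows "x \<in> Field r \<Longrightarrow> stab (\<lambda>i. Lv (As i) x)"
proof (induct x rule: lt_induct)
  case (1 x)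
  show ?case
  proof (cases "x \<in> Eg")
    case True
    hence eq: "\<And>i. Lv (As i) x = (if x \<in> As i then {x} else {})" using Lv_eq by simp
    show ?thesis
    proof (cases "\<exists>i1. lt r i1 \<rho> \<and> x \<notin> As i1")
      case True
      then obtain i1 where i1: "lt r i1 \<rho>" "x \<notin> As i1" by blast
      have "\<forall>i. lt r i \<rho> \<longrightarrow> (i1,i) \<in> r \<longrightarrow> Lv (As i) x = Lv (As i1) x"
      proof (intro allI impI)
        fix i assume "lt r i \<rho>" "(i1,i) \<in> r"
        hence "x \<notin> As i" using dec[OF i1(1)] i1(2) by blast
        thus "Lv (As i) x = Lv (As i1) x" using eq i1(2) by simp
      qed
      thus ?thesis unfolding stab_def using i1 by blast
    next
      case False
      obtain j0 where j0: "lt r j0 \<rho>" using ric_ne[OF RR] by blast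
      have "\<forall>i. lt r i \<rho> \<longrightarrow> (j0,i) \<in> r \<longrightarrow> Lv (As i) x = Lv (As j0) x"
        using eq False j0 by auto
      thus ?thesis unfolding stab_def using j0 by blast
    qed
  next
    case nE: False
    have ps: "\<And>\<gamma>. \<gamma> \<in> Lset x \<Longrightarrow> stab (\<lambda>i. part (As i) x \<gamma>)"
    proof -
      fix \<gamma> assume g: "\<gamma> \<in> Lset x"
      have gx: "lt r \<gamma> x" using Lset_props[OF 1(2) nE] g unfolding underS_lt by blast
      have gF: "\<gamma> \<in> Field r" using ltF1[OF gx] .
      show "stab (\<lambda>i. part (As i) x \<gamma>)"
      proof (cases "\<exists>i1. lt r i1 \<rho> \<and> As i1 \<inter> under r \<gamma> = {}")
        case True
        then obtain i1 where i1: "lt r i1 \<rho>" "As i1 \<inter> under r \<gamma> = {}" by blast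
        have "\<forall>i. lt r i \<rho> \<longrightarrow> (i1,i) \<in> r \<longrightarrow> part (As i) x \<gamma> = part (As i1) x \<gamma>"
        proof (intro allI impI)
          fix i assume "lt r i \<rho>" "(i1,i) \<in> r"
          hence "As i \<inter> under r \<gamma> = {}" using dec[OF i1(1)] i1(2) by blast
          thus "part (As i) x \<gamma> = part (As i1) x \<gamma>" using i1(2) unfolding part_def by simp
        qed
        thus ?thesis unfolding stab_def using i1 by blast
      next
        case False
        define s where "s = (\<lambda>i. supr (As i \<inter> under r \<gamma>))"
        have BF: "\<And>i. As i \<inter> under r \<gamma> \<subseteq> Field r" using AF by blast
        have gu: "\<And>i. \<forall>b\<in>As i \<inter> under r \<gamma>. (b,\<gamma>) \<in> r" unfolding under_le by blast
        have sg: "\<And>i. (s i, \<gamma>) \<in> r" unfolding s_def using supr_props[OF BF gF gu] gF gu by blast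
        have sF: "\<And>i. s i \<in> Field r" unfolding s_def using supr_props[OF BF gF gu] by blast
        obtain j0 where j0: "lt r j0 \<rho>" using ric_ne[OF RR] by blast
        obtain m where m: "m \<in> s ` underS r \<rho>" "\<forall>v\<in>s ` underS r \<rho>. (m,v) \<in> r"
          using minex[of "s ` underS r \<rho>"] sF j0 unfolding underS_lt by blast
        obtain i1 where i1: "lt r i1 \<rho>" "m = s i1" using m(1) unfolding underS_lt by blast
        have seq: "\<And>i. lt r i \<rho> \<Longrightarrow> (i1,i) \<in> r \<Longrightarrow> s i = s i1"
        proof -
          fix i assume i: "lt r i \<rho>" "(i1,i) \<in> r"
          have "(s i, s i1) \<in> r" unfolding s_def
            by (rule supr_mono[OF _ BF gF gu]) (use dec[OF i1(1) i(1) i(2)] in blast)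
          moreover have "(s i1, s i) \<in> r" using m(2) i1(2) i(1) unfolding underS_lt by blast
          ultimately show "s i = s i1" using antisym by blast
        qed
        have sx: "lt r (s i1) x" using le_lt_trans[OF sg gx] .
        have "stab (\<lambda>i. Lv (As i) (s i1))" using 1(1)[OF sx sF] .
        then obtain i2 where i2: "lt r i2 \<rho>" "\<forall>i. lt r i \<rho> \<longrightarrow> (i2,i) \<in> r \<longrightarrow> Lv (As i) (s i1) = Lv (As i2) (s i1)"
          unfolding stab_def by blast
        obtain i0 where i0: "lt r i0 \<rho>" "(i1,i0) \<in> r" "(i2,i0) \<in> r" using max_idx[OF i1(1) i2(1)] by blast
        have peq: "\<And>i. lt r i \<rho> \<Longrightarrow> (i0,i) \<in> r \<Longrightarrow> part (As i) x \<gamma> = Lv (As i2) (s i1)"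
        proof -
          fix i assume i: "lt r i \<rho>" "(i0,i) \<in> r"
          have ii1: "(i1,i) \<in> r" using trans[OF i0(2) i(2)] .
          have ii2: "(i2,i) \<in> r" using trans[OF i0(3) i(2)] .
          have ne: "As i \<inter> under r \<gamma> \<noteq> {}" using False i(1) by blast
          have "part (As i) x \<gamma> = Lv (As i) (s i)" unfolding part_def using ne seq[OF i(1) ii1] sx
            unfolding s_def by simp
          also have "\<dots> = Lv (As i) (s i1)" using seq[OF i(1) ii1] by simp
          also have "\<dots> = Lv (As i2) (s i1)" using i2(2) i(1) ii2 by blast
          finally show "part (As i) x \<gamma> = Lv (As i2) (s i1)" .
        qed
        have "\<forall>i. lt r i \<rho> \<longrightarrow> (i0,i) \<in> r \<longrightarrow> part (As i) x \<gamma> = part (As i0) x \<gamma>"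
          using peq i0(1) refl[OF ltF1[OF i0(1)]] by metis
        thus ?thesis unfolding stab_def using i0(1) by blast
      qed
    qed
    define mm where "mm = (\<lambda>\<gamma>. SOME i0. lt r i0 \<rho> \<and> (\<forall>i. lt r i \<rho> \<longrightarrow> (i0,i) \<in> r \<longrightarrow> part (As i) x \<gamma> = part (As i0) x \<gamma>))"
    have mm: "\<And>\<gamma>. \<gamma> \<in> Lset x \<Longrightarrow> lt r (mm \<gamma>) \<rho> \<and> (\<forall>i. lt r i \<rho> \<longrightarrow> (mm \<gamma>,i) \<in> r \<longrightarrow> part (As i) x \<gamma> = part (As (mm \<gamma>)) x \<gamma>)"
    proof -
      fix \<gamma> assume "\<gamma> \<in> Lset x"
      hence "\<exists>i0. lt r i0 \<rho> \<and> (\<forall>i. lt r i \<rho> \<longrightarrow> (i0,i) \<in> r \<longrightarrow> part (As i) x \<gamma> = part (As i0) x \<gamma>)"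
        using ps unfolding stab_def by blast
      thus "lt r (mm \<gamma>) \<rho> \<and> (\<forall>i. lt r i \<rho> \<longrightarrow> (mm \<gamma>,i) \<in> r \<longrightarrow> part (As i) x \<gamma> = part (As (mm \<gamma>)) x \<gamma>)"
        unfolding mm_def by (rule someI_ex)
    qed
    have Msub: "mm ` Lset x \<subseteq> underS r \<rho>" using mm unfolding underS_lt by blast
    have Msm: "|mm ` Lset x| <o |underS r \<rho>|"
      using card_of_image Lset_props[OF 1(2) nE] ordLeq_ordLess_trans by blast
    obtain i0 where i0: "lt r i0 \<rho>" "\<forall>m\<in>mm ` Lset x. (m,i0) \<in> r" using ric_bound[OF RR Msub Msm] by blast
    have "\<forall>i. lt r i \<rho> \<longrightarrow> (i0,i) \<in> r \<longrightarrow> Lv (As i) x = Lv (As i0) x"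
    proof (intro allI impI)
      fix i assume i: "lt r i \<rho>" "(i0,i) \<in> r"
      have "\<And>\<gamma>. \<gamma> \<in> Lset x \<Longrightarrow> part (As i) x \<gamma> = part (As i0) x \<gamma>"
      proof -
        fix \<gamma> assume g: "\<gamma> \<in> Lset x"
        have m0: "(mm \<gamma>, i0) \<in> r" using i0(2) g by blast
        have "part (As i) x \<gamma> = part (As (mm \<gamma>)) x \<gamma>" using mm[OF g] i trans[OF m0 i(2)] by blast
        moreover have "part (As i0) x \<gamma> = part (As (mm \<gamma>)) x \<gamma>" using mm[OF g] i0(1) m0 by blast
        ultimately show "part (As i) x \<gamma> = part (As i0) x \<gamma>" by simp
      qed
      thus "Lv (As i) x = Lv (As i0) x" using Lv_eq[of "As i" x] Lv_eq[of "As i0" x] nE by simp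
    qed
    thus ?thesis unfolding stab_def using i0(1) by blast
  qed
qed

end


context KK2 begin

theorem main:
  "\<exists>c :: 'a \<Rightarrow> 'a set.
     (\<forall>\<alpha> \<in> E_eq r \<theta> \<inter> acc r (E_ge r \<rho>).
         c \<alpha> \<subseteq> E_ge r \<rho> \<inter> underS r \<alpha> \<and> sup_eq r (c \<alpha>) \<alpha>) \<and>
     (\<forall>C. club r C \<longrightarrow>
         {\<alpha> \<in> E_eq r \<theta> \<inter> acc r (E_ge r \<rho>). c \<alpha> \<subseteq> C} \<in> Pow (Field r) - K)"
proof (rule ccontr)
  assume neg: "\<not> ?thesis"
  define S where "S = E_eq r \<theta> \<inter> acc r Eg"
  have SF: "S \<subseteq> Field r" unfolding S_def E_eq_def acc_def by auto
  define cof where "cof = (\<lambda>E \<alpha>. if Lv (E \<inter> Eg) \<alpha> \<subseteq> Eg \<inter> underS r \<alpha> \<and> sup_eq r (Lv (E \<inter> Eg) \<alpha>) \<alpha>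
      then Lv (E \<inter> Eg) \<alpha> else Eg \<inter> underS r \<alpha>)"
  have valid: "\<And>E. \<forall>\<alpha>\<in>S. cof E \<alpha> \<subseteq> Eg \<inter> underS r \<alpha> \<and> sup_eq r (cof E \<alpha>) \<alpha>"
  proof
    fix E \<alpha> assume a: "\<alpha> \<in> S"
    have "sup_eq r (Eg \<inter> underS r \<alpha>) \<alpha>" using a unfolding S_def acc_def by blast
    thus "cof E \<alpha> \<subseteq> Eg \<inter> underS r \<alpha> \<and> sup_eq r (cof E \<alpha>) \<alpha>" unfolding cof_def by auto
  qed
  have bad: "\<And>E. \<exists>C. club r C \<and> {\<alpha>\<in>S. cof E \<alpha> \<subseteq> C} \<in> K"
  proof -
    fix E
    have "\<not> (\<forall>C. club r C \<longrightarrow> {\<alpha>\<in>S. cof E \<alpha> \<subseteq> C} \<in> Pow (Field r) - K)"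
      using neg valid[of E] unfolding S_def by blast
    then obtain C where "club r C" "{\<alpha>\<in>S. cof E \<alpha> \<subseteq> C} \<notin> Pow (Field r) - K" by blast
    moreover have "{\<alpha>\<in>S. cof E \<alpha> \<subseteq> C} \<in> Pow (Field r)" using SF by blast
    ultimately show "\<exists>C. club r C \<and> {\<alpha>\<in>S. cof E \<alpha> \<subseteq> C} \<in> K" by blast
  qed
  define W where "W = (\<lambda>E. SOME C. club r C \<and> {\<alpha>\<in>S. cof E \<alpha> \<subseteq> C} \<in> K)"
  have W: "\<And>E. club r (W E) \<and> {\<alpha>\<in>S. cof E \<alpha> \<subseteq> W E} \<in> K"
    unfolding W_def using bad by (rule someI_ex)
  define Es where "Es = wfrec {(x,y). lt r x y} (\<lambda>g i. Field r \<inter> \<Inter> ((\<lambda>j. W (g j)) ` {j. lt r j i}))"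
  have Es_eq: "\<And>i. Es i = Field r \<inter> \<Inter> ((\<lambda>j. W (Es j)) ` {j. lt r j i})"
    unfolding Es_def
  proof (rule rec_eq)
    fix g g' :: "'a \<Rightarrow> 'a set" and i assume h: "\<And>j. lt r j i \<Longrightarrow> g j = g' j"
    have "(\<lambda>j. W (g j)) ` {j. lt r j i} = (\<lambda>j. W (g' j)) ` {j. lt r j i}"
      by (rule image_cong) (use h in auto)
    thus "Field r \<inter> \<Inter> ((\<lambda>j. W (g j)) ` {j. lt r j i}) = Field r \<inter> \<Inter> ((\<lambda>j. W (g' j)) ` {j. lt r j i})" by simp
  qed
  have Es_F: "\<And>i. Es i \<subseteq> Field r"
  proof -
    fix i show "Es i \<subseteq> Field r" by (subst Es_eq) blast
  qed
  have Es_club: "\<And>i. i \<in> Field r \<Longrightarrow> club r (Es i)"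
  proof -
    fix i assume i: "i \<in> Field r"
    have "|(\<lambda>j. W (Es j)) ` {j. lt r j i}| <o r"
      using card_of_image small_underS[OF i] ordLeq_ordLess_trans unfolding underS_lt by blast
    moreover have "\<forall>C\<in>(\<lambda>j. W (Es j)) ` {j. lt r j i}. club r C" using W by blast
    ultimately have "club r (Field r \<inter> \<Inter> ((\<lambda>j. W (Es j)) ` {j. lt r j i}))" by (intro club_inter)
    thus "club r (Es i)" using Es_eq[of i] by simp
  qed
  have Es_dec: "\<And>i j. (j,i) \<in> r \<Longrightarrow> Es i \<subseteq> Es j"
  proof -
    fix i j assume ji: "(j,i) \<in> r"
    have "\<And>k. lt r k j \<Longrightarrow> lt r k i" by (rule lt_le_trans[OF _ ji])
    hence "(\<lambda>k. W (Es k)) ` {k. lt r k j} \<subseteq> (\<lambda>k. W (Es k)) ` {k. lt r k i}" by blast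
    hence "Field r \<inter> \<Inter> ((\<lambda>k. W (Es k)) ` {k. lt r k i}) \<subseteq> Field r \<inter> \<Inter> ((\<lambda>k. W (Es k)) ` {k. lt r k j})" by blast
    thus "Es i \<subseteq> Es j" by (simp only: Es_eq[of i] Es_eq[of j])
  qed
  have Es_W: "\<And>i j. lt r j i \<Longrightarrow> Es i \<subseteq> W (Es j)"
  proof -
    fix i j assume "lt r j i"
    hence "Field r \<inter> \<Inter> ((\<lambda>k. W (Es k)) ` {k. lt r k i}) \<subseteq> W (Es j)" by blast
    thus "Es i \<subseteq> W (Es j)" by (simp only: Es_eq[of i])
  qed
  define As where "As = (\<lambda>i. Es i \<inter> Eg)"
  define E where "E = Es \<rho>"
  define A where "A = E \<inter> Eg"
  have Ecl: "club r E" unfolding E_def using Es_club[OF rhoF] .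
  have AF: "A \<subseteq> Field r" unfolding A_def E_def using Es_F by blast
  have accA: "club r (acc r A)"
    by (rule acc_club[OF AF]) (use Eg_unb[OF Ecl] in \<open>unfold A_def, blast\<close>)
  have accEg: "club r (acc r Eg)"
    by (rule acc_club[OF Eg_F]) (use Eg_unb[OF club_Field] in blast)
  have "countable {acc r Eg, acc r A}" by simp
  hence Dsm: "|{acc r Eg, acc r A}| <o r" by (rule countable_small)
  have Dcl: "club r (Field r \<inter> \<Inter>{acc r Eg, acc r A})"
    by (rule club_inter[OF _ Dsm]) (use accA accEg in blast)
  define N where "N = (\<lambda>j. {\<alpha>\<in>S. cof (Es j) \<alpha> \<subseteq> W (Es j)})"
  have NK: "\<And>j. N j \<in> K" unfolding N_def using W by blast
  have NNK: "\<Union> (N ` {j. lt r j \<rho>}) \<in> K"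
  proof -
    have "|N ` {j. lt r j \<rho>}| <o r"
      using card_of_image small_underS[OF rhoF] ordLeq_ordLess_trans unfolding underS_lt by blast
    moreover have "N ` {j. lt r j \<rho>} \<subseteq> K" using NK by blast
    ultimately show ?thesis using KC unfolding kappa_complete_def by blast
  qed
  have idsub: "\<And>X Y. X \<in> K \<Longrightarrow> Y \<subseteq> X \<Longrightarrow> Y \<in> K" using ID unfolding is_ideal_def by blast
  have idun: "\<And>X Y. X \<in> K \<Longrightarrow> Y \<in> K \<Longrightarrow> X \<union> Y \<in> K" using ID unfolding is_ideal_def by blast
  have FK: "Field r \<notin> K" using ID unfolding is_ideal_def by blast
  have "\<not> (S \<inter> acc r A \<subseteq> \<Union> (N ` {j. lt r j \<rho>}))"
  proof
    assume "S \<inter> acc r A \<subseteq> \<Union> (N ` {j. lt r j \<rho>})"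
    hence SK: "S \<inter> acc r A \<in> K" using idsub NNK by blast
    define Bc where "Bc = Field r - (S \<inter> acc r A)"
    have "(Bc \<inter> E_eq r \<theta>) \<inter> (Field r \<inter> \<Inter>{acc r Eg, acc r A}) = {}"
      unfolding Bc_def S_def by blast
    hence "\<not> stationary r (Bc \<inter> E_eq r \<theta>)" unfolding stationary_def using Dcl by blast
    hence "Bc \<in> NS_restr r \<theta>" unfolding NS_restr_def Bc_def by blast
    hence "Bc \<in> K" using NSK by blast
    hence "Bc \<union> (S \<inter> acc r A) \<in> K" using idun SK by blast
    moreover have "Bc \<union> (S \<inter> acc r A) = Field r" unfolding Bc_def using SF by blast
    ultimately show False using FK by simp
  qed
  then obtain \<alpha> where a: "\<alpha> \<in> S" "\<alpha> \<in> acc r A" "\<alpha> \<notin> \<Union> (N ` {j. lt r j \<rho>})" by blast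
  have aF: "\<alpha> \<in> Field r" using SF a by blast
  have anE: "\<alpha> \<notin> Eg" using notEg a(1) unfolding S_def by blast
  have Asdec: "\<And>i j. lt r j \<rho> \<Longrightarrow> lt r i \<rho> \<Longrightarrow> (j,i) \<in> r \<Longrightarrow> As i \<subseteq> As j"
    unfolding As_def using Es_dec by blast
  have AsF: "\<And>i. As i \<subseteq> Field r" unfolding As_def using Es_F by blast
  have "stab (\<lambda>i. Lv (As i) \<alpha>)" using Lv_stab[OF Asdec AsF aF] .
  then obtain i0 where i0: "lt r i0 \<rho>" "\<forall>i. lt r i \<rho> \<longrightarrow> (i0,i) \<in> r \<longrightarrow> Lv (As i) \<alpha> = Lv (As i0) \<alpha>"
    unfolding stab_def by blast
  obtain i1 where i1: "lt r i0 i1" "lt r i1 \<rho>" using ric_lim[OF RR i0(1)] by blast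
  have i0F: "i0 \<in> Field r" using ltF1[OF i0(1)] .
  have Ei0: "club r (Es i0)" using Es_club[OF i0F] .
  have AsubAs: "A \<subseteq> Es i0 \<inter> Eg" unfolding A_def E_def using Es_dec[OF lt_le[OF i0(1)]] by blast
  have hyp: "\<forall>\<eta>. lt r \<eta> \<alpha> \<longrightarrow> (\<exists>a\<in>Es i0 \<inter> Eg. lt r \<eta> a \<and> lt r a \<alpha>)"
    using acc_D[OF a(2)] AsubAs by blast
  have cofl: "\<forall>\<eta>. lt r \<eta> \<alpha> \<longrightarrow> (\<exists>l\<in>Lv (Es i0 \<inter> Eg) \<alpha>. lt r \<eta> l)"
    by (rule Lv_cof[OF Es_F _ aF anE hyp]) (use Ei0 in \<open>unfold club_def, blast\<close>)
  have subl: "Lv (Es i0 \<inter> Eg) \<alpha> \<subseteq> Eg \<inter> underS r \<alpha>"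
  proof
    fix l assume l: "l \<in> Lv (Es i0 \<inter> Eg) \<alpha>"
    have "l \<in> Es i0 \<inter> Eg" "l = \<alpha> \<or> lt r l \<alpha>" using Lv_sub[of "Es i0 \<inter> Eg" \<alpha>] l by blast+
    thus "l \<in> Eg \<inter> underS r \<alpha>" using anE unfolding underS_lt by blast
  qed
  have "sup_eq r (Lv (Es i0 \<inter> Eg) \<alpha>) \<alpha>" unfolding sup_eq_def using subl cofl by blast
  hence ceq: "cof (Es i0) \<alpha> = Lv (As i0) \<alpha>" unfolding cof_def As_def using subl by simp
  have "Lv (As i1) \<alpha> = Lv (As i0) \<alpha>" using i0(2) i1(2) lt_le[OF i1(1)] by blast
  hence "Lv (As i0) \<alpha> = Lv (As i1) \<alpha>" by simp
  also have "\<dots> \<subseteq> As i1" using Lv_sub by blast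
  also have "\<dots> \<subseteq> W (Es i0)" unfolding As_def using Es_W[OF i1(1)] by blast
  finally have "\<alpha> \<in> N i0" unfolding N_def using a(1) ceq by simp
  thus False using a(3) i0(1) by blast
qed

end

theorem proposition5p3:
  fixes r :: "'a rel" and \<theta> \<rho> :: 'a and K :: "'a set set"
  assumes "regular_uncountable r"
    and "regular_infinite_cardinal r \<theta>" and "regular_infinite_cardinal r \<rho>"
    and "lt r \<theta> \<rho>"
    and "is_ideal r K" and "kappa_complete r K"
    and "NS_restr r \<theta> \<subseteq> K"
  shows "\<exists>c :: 'a \<Rightarrow> 'a set.
     (\<forall>\<alpha> \<in> E_eq r \<theta> \<inter> acc r (E_ge r \<rho>).
         c \<alpha> \<subseteq> E_ge r \<rho> \<inter> underS r \<alpha> \<and> sup_eq r (c \<alpha>) \<alpha>) \<and>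
     (\<forall>C. club r C \<longrightarrow>
         {\<alpha> \<in> E_eq r \<theta> \<inter> acc r (E_ge r \<rho>). c \<alpha> \<subseteq> C} \<in> Pow (Field r) - K)"
proof -
  have "KK2 r \<theta> \<rho> K" unfolding KK2_def KK2_axioms_def KK_def using assms by blast
  then interpret KK2 r \<theta> \<rho> K .
  show ?thesis by (rule main)
qed


end
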